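(* For every $p\in\{1,\dots,K\}$ the total number of waiting clients in the top $p$ priority levels is geometrically distributed under $P$: for all integers $k\ge0$, $$\sum_{\substack{\mathbf n\in\mathbb N_0^K\\ n_1+\dots+n_p=k}}P(\mathbf n)=(1-\sigma_p)\,\sigma_p^{\,k}.$$ In particular the level-1 marginal is $(1-r_1)r_1^k$ and the total queue length is $(1-r)r^k$.
   Context: Fix integers $c\ge 1$, $K\ge 2$ and reals $r_1,\dots,r_K>0$ with $r=\sum_{k=1}^K r_k<1$ (here $r_k=\lambda_k/(c\mu)$ for an M/M/$c$ queue with $K$ non-preemptive priority levels, level 1 the highest). Write $\sigma_k=\sum_{j=1}^k r_j$, $\mathbf e_\kappa$ for the standard unit vectors of $\mathbb Z^K$, $\delta_{ij}$ for the Kronecker delta. Consider the equations for $(p_{\mathbf n})_{\mathbf n\in\mathbb N_0^K}$, with the convention $p_{\mathbf n}=0$ if some component of $\mathbf n$ is negative: $$(1+r)p_{\mathbf n}=\Big(\prod_{j=1}^K\delta_{0n_j}\Big)p_{\mathbf n}+\sum_{\kappa=1}^K\Big[r_\kappa p_{\mathbf n-\mathbf e_\kappa}+\Big(\prod_{j=1}^{\kappa-1}\delta_{0n_j}\Big)p_{\mathbf n+\mathbf e_\kappa}\Big],\quad \mathbf n\in\mathbb N_0^K .$$ These are the stationary balance equations for the states in which all $c$ servers are busy and $n_\kappa$ clients of level $\kappa$ wait in the queue; their nonnegative summable solutions form a one-dimensional cone, and $P$ denotes the unique solution with $\sum_{\mathbf n}P(\mathbf n)=1$. *)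

theory Defs
  imports "HOL-Analysis.Analysis"
begin

text \<open>Queue-content vectors n in N_0^K are modelled as functions nat => nat
  supported on the level set {1..K}.\<close>

definition states :: "nat \<Rightarrow> (nat \<Rightarrow> nat) set" where
  "states K = {n. \<forall>i. i \<notin> {1..K} \<longrightarrow> n i = 0}"

text \<open>p(n - e_kappa), with the convention p = 0 when a component is negative.\<close>
definition p_minus :: "((nat \<Rightarrow> nat) \<Rightarrow> real) \<Rightarrow> (nat \<Rightarrow> nat) \<Rightarrow> nat \<Rightarrow> real" where
  "p_minus p n \<kappa> = (if n \<kappa> = 0 then 0 else p (n(\<kappa> := n \<kappa> - 1)))"

definition p_plus :: "((nat \<Rightarrow> nat) \<Rightarrow> real) \<Rightarrow> (nat \<Rightarrow> nat) \<Rightarrow> nat \<Rightarrow> real" where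
  "p_plus p n \<kappa> = p (n(\<kappa> := n \<kappa> + 1))"

definition balance :: "nat \<Rightarrow> (nat \<Rightarrow> real) \<Rightarrow> ((nat \<Rightarrow> nat) \<Rightarrow> real) \<Rightarrow> bool" where
  "balance K r p \<longleftrightarrow>
     (\<forall>n \<in> states K.
        (1 + (\<Sum>j=1..K. r j)) * p n =
          (\<Prod>j=1..K. if n j = 0 then 1 else 0) * p n
          + (\<Sum>\<kappa>=1..K. r \<kappa> * p_minus p n \<kappa>
                + (\<Prod>j=1..\<kappa>-1. if n j = 0 then 1 else 0) * p_plus p n \<kappa>))"

end

theory Submission
  imports Defs
begin

definition Spd :: "nat \<Rightarrow> (nat \<Rightarrow> nat) \<Rightarrow> nat" where
  "Spd p n = (\<Sum>j=1..p. n j)"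

definition Ind :: "nat \<Rightarrow> nat \<Rightarrow> (nat \<Rightarrow> nat) \<Rightarrow> real" where
  "Ind p j m = (if Spd p m = j then 1 else 0)"

lemma has_sum_sum_fun:
  fixes f :: "'i \<Rightarrow> 'a \<Rightarrow> real"
  assumes "finite I" "\<And>i. i\<in>I \<Longrightarrow> (f i has_sum s i) A"
  shows "((\<lambda>x. \<Sum>i\<in>I. f i x) has_sum (\<Sum>i\<in>I. s i)) A"
  using assms by (induction I rule: finite_induct) (auto intro!: has_sum_add)

lemma upd_states: "m \<in> states K \<Longrightarrow> \<kappa> \<in> {1..K} \<Longrightarrow> m(\<kappa> := v) \<in> states K"
  by (auto simp: states_def)

lemma inj_shift: "inj_on (\<lambda>m::nat\<Rightarrow>nat. m(\<kappa> := m \<kappa> + 1)) A"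
proof (rule inj_onI)
  fix a b :: "nat \<Rightarrow> nat"
  assume eq: "a(\<kappa> := a \<kappa> + 1) = b(\<kappa> := b \<kappa> + 1)"
  show "a = b"
  proof
    fix j
    have "(a(\<kappa> := a \<kappa> + 1)) j = (b(\<kappa> := b \<kappa> + 1)) j" using eq by simp
    then show "a j = b j" by (cases "j = \<kappa>") auto
  qed
qed

lemma img_shift:
  assumes "\<kappa> \<in> {1..K}"
  shows "(\<lambda>m::nat\<Rightarrow>nat. m(\<kappa> := m \<kappa> + 1)) ` states K = {n \<in> states K. n \<kappa> \<noteq> 0}"
proof
  show "(\<lambda>m. m(\<kappa> := m \<kappa> + 1)) ` states K \<subseteq> {n \<in> states K. n \<kappa> \<noteq> 0}"
    using assms by (auto simp: states_def)
  show "{n \<in> states K. n \<kappa> \<noteq> 0} \<subseteq> (\<lambda>m. m(\<kappa> := m \<kappa> + 1)) ` states K"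
  proof
    fix n assume n: "n \<in> {n \<in> states K. n \<kappa> \<noteq> 0}"
    then have "n = (n(\<kappa> := n \<kappa> - 1))(\<kappa> := (n(\<kappa> := n \<kappa> - 1)) \<kappa> + 1)" by auto
    moreover have "n(\<kappa> := n \<kappa> - 1) \<in> states K" using n assms upd_states by blast
    ultimately show "n \<in> (\<lambda>m. m(\<kappa> := m \<kappa> + 1)) ` states K" by blast
  qed
qed

lemma shift_minus:
  fixes P :: "(nat \<Rightarrow> nat) \<Rightarrow> real" and G :: "(nat \<Rightarrow> nat) \<Rightarrow> real"
  assumes "\<kappa> \<in> {1..K}"
  shows "((\<lambda>n. G n * p_minus P n \<kappa>) has_sum X) (states K) \<longleftrightarrow>
         ((\<lambda>m. G (m(\<kappa> := m \<kappa> + 1)) * P m) has_sum X) (states K)"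
proof -
  let ?h = "\<lambda>m::nat\<Rightarrow>nat. m(\<kappa> := m \<kappa> + 1)"
  have "((\<lambda>n. G n * p_minus P n \<kappa>) has_sum X) (states K) \<longleftrightarrow>
        ((\<lambda>n. G n * p_minus P n \<kappa>) has_sum X) {n \<in> states K. n \<kappa> \<noteq> 0}"
    apply (rule has_sum_cong_neutral)
    subgoal by blast
    subgoal by (simp add: p_minus_def)
    subgoal by blast
    done
  also have "\<dots> \<longleftrightarrow> ((\<lambda>n. G n * p_minus P n \<kappa>) has_sum X) (?h ` states K)"
    using img_shift[OF assms] by simp
  also have "\<dots> \<longleftrightarrow> (((\<lambda>n. G n * p_minus P n \<kappa>) \<circ> ?h) has_sum X) (states K)"
    by (rule has_sum_reindex[OF inj_shift])
  also have "\<dots> \<longleftrightarrow> ((\<lambda>m. G (?h m) * P m) has_sum X) (states K)"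
    by (rule has_sum_cong) (simp add: p_minus_def)
  finally show ?thesis .
qed

lemma shift_plus:
  fixes P :: "(nat \<Rightarrow> nat) \<Rightarrow> real" and G :: "(nat \<Rightarrow> nat) \<Rightarrow> real"
  assumes "\<kappa> \<in> {1..K}"
  shows "((\<lambda>n. G n * p_plus P n \<kappa>) has_sum X) (states K) \<longleftrightarrow>
         ((\<lambda>m. (if m \<kappa> = 0 then 0 else G (m(\<kappa> := m \<kappa> - 1))) * P m) has_sum X) (states K)"
proof -
  let ?h = "\<lambda>m::nat\<Rightarrow>nat. m(\<kappa> := m \<kappa> + 1)"
  let ?g = "\<lambda>m. (if m \<kappa> = 0 then 0 else G (m(\<kappa> := m \<kappa> - 1))) * P m"
  have "(?g has_sum X) (states K) \<longleftrightarrow> (?g has_sum X) {n \<in> states K. n \<kappa> \<noteq> 0}"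
    apply (rule has_sum_cong_neutral)
    subgoal by blast
    subgoal by simp
    subgoal by blast
    done
  also have "\<dots> \<longleftrightarrow> (?g has_sum X) (?h ` states K)"
    using img_shift[OF assms] by simp
  also have "\<dots> \<longleftrightarrow> ((?g \<circ> ?h) has_sum X) (states K)"
    by (rule has_sum_reindex[OF inj_shift])
  also have "\<dots> \<longleftrightarrow> ((\<lambda>n. G n * p_plus P n \<kappa>) has_sum X) (states K)"
    by (rule has_sum_cong) (simp add: p_plus_def)
  finally show ?thesis by (rule sym)
qed

lemma weighted:
  fixes P W :: "'a \<Rightarrow> real"
  assumes "P summable_on A" "\<And>m. m\<in>A \<Longrightarrow> 0 \<le> P m" "\<And>m. m\<in>A \<Longrightarrow> 0 \<le> W m"
    "\<And>m. m\<in>A \<Longrightarrow> W m \<le> B"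
  shows "((\<lambda>m. W m * P m) has_sum infsum (\<lambda>m. W m * P m) A) A"
proof -
  have sB: "(\<lambda>m. B * P m) summable_on A" by (rule summable_on_cmult_right[OF assms(1)])
  have "(\<lambda>m. W m * P m) summable_on A"
  proof (rule summable_on_comparison_test[OF sB])
    fix m assume m: "m \<in> A"
    show "W m * P m \<le> B * P m" using m assms(2,4) by (intro mult_right_mono) auto
    show "0 \<le> W m * P m" using m assms(2,3) by simp
  qed
  then show ?thesis using has_sum_infsum by blast
qed

lemma sum_upd_in:
  fixes m :: "nat \<Rightarrow> nat"
  assumes "finite A" "\<kappa> \<in> A"
  shows "(\<Sum>j\<in>A. (m(\<kappa> := v)) j) + m \<kappa> = (\<Sum>j\<in>A. m j) + v"
proof -
  have "(\<Sum>j\<in>A. (m(\<kappa> := v)) j) = v + (\<Sum>j\<in>A-{\<kappa>}. m j)"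
    using assms by (simp add: sum.remove[OF assms])
  moreover have "(\<Sum>j\<in>A. m j) = m \<kappa> + (\<Sum>j\<in>A-{\<kappa>}. m j)"
    using assms by (simp add: sum.remove[OF assms])
  ultimately show ?thesis by simp
qed

lemma sum_upd_out:
  fixes m :: "nat \<Rightarrow> nat"
  assumes "\<kappa> \<notin> A"
  shows "(\<Sum>j\<in>A. (m(\<kappa> := v)) j) = (\<Sum>j\<in>A. m j)"
  using assms by (intro sum.cong) auto

lemma Spd_upd_in: "\<kappa> \<in> {1..p} \<Longrightarrow> Spd p (m(\<kappa> := v)) + m \<kappa> = Spd p m + v"
  unfolding Spd_def by (rule sum_upd_in) auto

lemma Spd_upd_out: "\<kappa> \<notin> {1..p} \<Longrightarrow> Spd p (m(\<kappa> := v)) = Spd p m"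
  unfolding Spd_def by (rule sum_upd_out)

lemma core_up:
  fixes r :: "nat \<Rightarrow> real"
  assumes "p \<le> K"
  shows "(\<Sum>\<kappa>=1..K. r \<kappa> * Ind p k (m(\<kappa> := m \<kappa> + 1))) =
     (if k = 0 then 0 else (\<Sum>j=1..p. r j)) * Ind p (k-1) m
     + ((\<Sum>j=1..K. r j) - (\<Sum>j=1..p. r j)) * Ind p k m"
proof -
  have split: "{1..K} = {1..p} \<union> {p+1..K}" using assms by auto
  have disj: "{1..p} \<inter> {p+1..K} = {}" by auto
  have s1: "(\<Sum>\<kappa>=1..p. r \<kappa> * Ind p k (m(\<kappa> := m \<kappa> + 1)))
      = (if k=0 then 0 else (\<Sum>j=1..p. r j)) * Ind p (k-1) m"
  proof (cases "k = 0")
    case True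
    have "Ind p k (m(\<kappa> := m \<kappa> + 1)) = 0" if "\<kappa>\<in>{1..p}" for \<kappa>
      using Spd_upd_in[OF that, of m "m \<kappa> + 1"] True by (auto simp: Ind_def)
    then show ?thesis using True by simp
  next
    case False
    have "Ind p k (m(\<kappa> := m \<kappa> + 1)) = Ind p (k-1) m" if "\<kappa>\<in>{1..p}" for \<kappa>
      using Spd_upd_in[OF that, of m "m \<kappa> + 1"] False by (auto simp: Ind_def)
    then have "(\<Sum>\<kappa>=1..p. r \<kappa> * Ind p k (m(\<kappa> := m \<kappa> + 1))) = (\<Sum>\<kappa>=1..p. r \<kappa> * Ind p (k-1) m)"
      by (intro sum.cong) auto
    then show ?thesis using False by (simp add: sum_distrib_right)
  qed
  have s2: "(\<Sum>\<kappa>=p+1..K. r \<kappa> * Ind p k (m(\<kappa> := m \<kappa> + 1))) = (\<Sum>\<kappa>=p+1..K. r \<kappa>) * Ind p k m"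
  proof -
    have "(\<Sum>\<kappa>=p+1..K. r \<kappa> * Ind p k (m(\<kappa> := m \<kappa> + 1))) = (\<Sum>\<kappa>=p+1..K. r \<kappa> * Ind p k m)"
      by (intro sum.cong) (auto simp: Ind_def Spd_upd_out)
    then show ?thesis by (simp add: sum_distrib_right)
  qed
  have s3: "(\<Sum>j=1..K. r j) = (\<Sum>j=1..p. r j) + (\<Sum>j=p+1..K. r j)"
    unfolding split by (rule sum.union_disjoint) (use disj in auto)
  have s4: "(\<Sum>\<kappa>=1..K. r \<kappa> * Ind p k (m(\<kappa> := m \<kappa> + 1))) =
     (\<Sum>\<kappa>=1..p. r \<kappa> * Ind p k (m(\<kappa> := m \<kappa> + 1))) + (\<Sum>\<kappa>=p+1..K. r \<kappa> * Ind p k (m(\<kappa> := m \<kappa> + 1)))"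
    unfolding split by (rule sum.union_disjoint) (use disj in auto)
  show ?thesis using s1 s2 s3 s4 by simp
qed

lemma core_down:
  assumes m: "m \<in> states K" and pK: "p \<le> K"
  shows "Ind p k m * (\<Prod>j=1..K. if m j = 0 then 1 else 0)
     + (\<Sum>\<kappa>=1..K. (if m \<kappa> = 0 then 0 else Ind p k (m(\<kappa> := m \<kappa> - 1))
           * (\<Prod>j=1..\<kappa>-1. if (m(\<kappa> := m \<kappa> - 1)) j = 0 then 1 else 0)))
     = (if k = 0 then Ind p 0 m else 0) + Ind p (k+1) m"
proof (cases "\<forall>j. m j = 0")
  case True
  then have "Spd p m = 0" by (simp add: Spd_def)
  then show ?thesis using True by (simp add: Ind_def)
next
  case False
  then obtain j0 where j0: "m j0 \<noteq> 0" by blast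
  define k0 where "k0 = (LEAST j. m j \<noteq> 0)"
  have mk0: "m k0 \<noteq> 0" unfolding k0_def using j0 by (rule LeastI)
  have below: "m j = 0" if "j < k0" for j
    using that not_less_Least unfolding k0_def by blast
  have k0K: "k0 \<in> {1..K}" using mk0 m by (auto simp: states_def)
  have prod0: "(\<Prod>j=1..K. if m j = 0 then 1 else (0::real)) = 0"
    by (rule prod_zero) (use k0K mk0 in auto)
  let ?F = "\<lambda>\<kappa>. (if m \<kappa> = 0 then 0 else Ind p k (m(\<kappa> := m \<kappa> - 1))
           * (\<Prod>j=1..\<kappa>-1. if (m(\<kappa> := m \<kappa> - 1)) j = 0 then 1 else (0::real)))"
  have other: "?F \<kappa> = 0" if "\<kappa> \<in> {1..K} - {k0}" for \<kappa>
  proof (cases "m \<kappa> = 0")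
    case False
    then have "k0 \<le> \<kappa>" unfolding k0_def by (rule Least_le)
    then have a1: "k0 \<in> {1..\<kappa>-1}" using that k0K by auto
    have a2: "(m(\<kappa> := m \<kappa> - 1)) k0 \<noteq> 0" using mk0 that by auto
    have "(\<Prod>j=1..\<kappa>-1. if (m(\<kappa> := m \<kappa> - 1)) j = 0 then 1 else (0::real)) = 0"
      by (rule prod_zero) (simp, rule bexI[OF _ a1], use a2 in simp)
    then show ?thesis by simp
  qed simp
  have "(\<Sum>\<kappa>=1..K. ?F \<kappa>) = ?F k0 + (\<Sum>\<kappa>\<in>{1..K} - {k0}. ?F \<kappa>)"
    by (rule sum.remove) (use k0K in auto)
  also have "(\<Sum>\<kappa>\<in>{1..K} - {k0}. ?F \<kappa>) = 0" using other by simp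
  also have "(\<Prod>j=1..k0-1. if (m(k0 := m k0 - 1)) j = 0 then 1 else (0::real)) = 1"
    using below by (intro prod.neutral) auto
  then have "?F k0 = Ind p k (m(k0 := m k0 - 1))" using mk0 by simp
  finally have sumF: "(\<Sum>\<kappa>=1..K. ?F \<kappa>) = Ind p k (m(k0 := m k0 - 1))" by simp
  show ?thesis
  proof (cases "k0 \<le> p")
    case True
    then have "k0 \<in> {1..p}" using k0K by auto
    from Spd_upd_in[OF this, of m "m k0 - 1"] mk0
    have "Spd p (m(k0 := m k0 - 1)) + 1 = Spd p m" and "Spd p m \<ge> 1" by auto
    then show ?thesis using sumF prod0 by (auto simp: Ind_def)
  next
    case False
    then have "k0 \<notin> {1..p}" by auto
    then have e: "Spd p (m(k0 := m k0 - 1)) = Spd p m" by (rule Spd_upd_out)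
    have "Spd p m = 0" unfolding Spd_def using below False by (intro sum.neutral) auto
    then show ?thesis using sumF prod0 e by (auto simp: Ind_def)
  qed
qed


lemma prod_ind:
  assumes "finite A"
  shows "(\<Prod>j\<in>A. if Q j then 1 else (0::real)) = (if \<forall>j\<in>A. Q j then 1 else 0)"
  using assms by (induction A rule: finite_induct) auto

lemma Ind01: "0 \<le> Ind p j m" "Ind p j m \<le> 1"
  by (auto simp: Ind_def)

theorem mainTheorem4:
  fixes K :: nat and r :: "nat \<Rightarrow> real" and P :: "(nat \<Rightarrow> nat) \<Rightarrow> real"
  assumes K2: "K \<ge> 2"
    and rpos: "\<forall>k\<in>{1..K}. r k > 0"
    and rlt1: "(\<Sum>k=1..K. r k) < 1"
    and bal: "balance K r P"
    and nonneg: "\<forall>n\<in>states K. P n \<ge> 0"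
    and summ: "P summable_on states K"
    and norm: "infsum P (states K) = 1"
    and p: "p \<in> {1..K}"
  shows "infsum P {n \<in> states K. (\<Sum>j=1..p. n j) = k}
           = (1 - (\<Sum>j=1..p. r j)) * (\<Sum>j=1..p. r j) ^ k"
proof -
  define \<sigma> where "\<sigma> = (\<Sum>j=1..p. r j)"
  define R where "R = (\<Sum>j=1..K. r j)"
  define Q where "Q = (\<lambda>j. infsum P {n \<in> states K. Spd p n = j})"
  have pK: "p \<le> K" using p by auto
  have Pnn: "\<And>m. m \<in> states K \<Longrightarrow> 0 \<le> P m" using nonneg by auto
  have hasQ: "((\<lambda>m. Ind p j m * P m) has_sum Q j) (states K)" for j
  proof -
    have sub: "P summable_on {n \<in> states K. Spd p n = j}"
      by (rule summable_on_subset_banach[OF summ]) auto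
    have h1: "(P has_sum Q j) {n \<in> states K. Spd p n = j}"
      unfolding Q_def using sub by (rule has_sum_infsum)
    have "((\<lambda>m. Ind p j m * P m) has_sum Q j) (states K) \<longleftrightarrow> (P has_sum Q j) {n \<in> states K. Spd p n = j}"
      apply (rule has_sum_cong_neutral)
      subgoal by blast
      subgoal by (auto simp: Ind_def)
      subgoal by (auto simp: Ind_def)
      done
    then show ?thesis using h1 by simp
  qed
  have E: "(1+R) * Q k = (if k=0 then 1 else 0) * Q 0 + Q (k+1) + (if k=0 then 0 else \<sigma>) * Q (k-1) + (R-\<sigma>) * Q k" for k
  proof -
    define Wa where "Wa = (\<lambda>m. Ind p k m * (\<Prod>j=1..K. if m j = 0 then 1 else (0::real)))"
    define G where "G = (\<lambda>\<kappa> n. Ind p k n * (\<Prod>j=1..\<kappa>-1. if n j = 0 then 1 else (0::real)))"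
    define Wu where "Wu = (\<lambda>\<kappa> m. r \<kappa> * Ind p k (m(\<kappa> := m \<kappa> + 1)))"
    define Wd where "Wd = (\<lambda>\<kappa> m. (if m \<kappa> = 0 then 0 else G \<kappa> (m(\<kappa> := m \<kappa> - 1))))"
    define Xa where "Xa = infsum (\<lambda>m. Wa m * P m) (states K)"
    define Xu where "Xu = (\<lambda>\<kappa>. infsum (\<lambda>m. Wu \<kappa> m * P m) (states K))"
    define Xd where "Xd = (\<lambda>\<kappa>. infsum (\<lambda>m. Wd \<kappa> m * P m) (states K))"
    have hWa: "((\<lambda>m. Wa m * P m) has_sum Xa) (states K)"
      unfolding Xa_def by (rule weighted[where B=1]) (use summ Pnn in \<open>auto simp: Wa_def Ind_def prod_ind\<close>)
    have hWu: "((\<lambda>m. Wu \<kappa> m * P m) has_sum Xu \<kappa>) (states K)" if "\<kappa> \<in> {1..K}" for \<kappa>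
      unfolding Xu_def
    proof (rule weighted[where B="r \<kappa>"])
      have "r \<kappa> > 0" using rpos that by blast
      then show "\<And>m. 0 \<le> Wu \<kappa> m" "\<And>m. Wu \<kappa> m \<le> r \<kappa>"
        by (auto simp: Wu_def Ind_def)
    qed (use summ Pnn in auto)
    have hWd: "((\<lambda>m. Wd \<kappa> m * P m) has_sum Xd \<kappa>) (states K)" for \<kappa>
      unfolding Xd_def by (rule weighted[where B=1]) (use summ Pnn in \<open>auto simp: Wd_def G_def Ind_def prod_ind\<close>)
    have hTu: "((\<lambda>n. (r \<kappa> * Ind p k n) * p_minus P n \<kappa>) has_sum Xu \<kappa>) (states K)" if "\<kappa> \<in> {1..K}" for \<kappa>
      using hWu[OF that] shift_minus[OF that, where G="\<lambda>n. r \<kappa> * Ind p k n" and P=P and X="Xu \<kappa>"]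
      unfolding Wu_def by simp
    have hTd: "((\<lambda>n. G \<kappa> n * p_plus P n \<kappa>) has_sum Xd \<kappa>) (states K)" if "\<kappa> \<in> {1..K}" for \<kappa>
      using hWd[of \<kappa>] shift_plus[OF that, where G="G \<kappa>" and P=P and X="Xd \<kappa>"]
      unfolding Wd_def by simp
    have sumT: "((\<lambda>n. \<Sum>\<kappa>=1..K. (r \<kappa> * Ind p k n) * p_minus P n \<kappa> + G \<kappa> n * p_plus P n \<kappa>)
        has_sum (\<Sum>\<kappa>=1..K. Xu \<kappa> + Xd \<kappa>)) (states K)"
      by (rule has_sum_sum_fun) (auto intro!: has_sum_add hTu hTd)
    note tot1 = has_sum_add[OF hWa sumT]
    have lhs: "((\<lambda>n. Ind p k n * P n * (1+R)) has_sum (Q k * (1+R))) (states K)"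
      by (rule has_sum_cmult_left[OF hasQ])
    have eq1: "Ind p k n * P n * (1+R) = Wa n * P n + (\<Sum>\<kappa>=1..K. (r \<kappa> * Ind p k n) * p_minus P n \<kappa> + G \<kappa> n * p_plus P n \<kappa>)"
      if "n \<in> states K" for n
    proof -
      have b: "(1+R) * P n = (\<Prod>j=1..K. if n j = 0 then 1 else 0) * P n + (\<Sum>\<kappa>=1..K. r \<kappa> * p_minus P n \<kappa> + (\<Prod>j=1..\<kappa>-1. if n j = 0 then 1 else 0) * p_plus P n \<kappa>)"
        using bal that unfolding balance_def R_def by blast
      have "Ind p k n * P n * (1+R) = Ind p k n * ((1+R) * P n)" by simp
      also have "\<dots> = Ind p k n * ((\<Prod>j=1..K. if n j = 0 then 1 else 0) * P n + (\<Sum>\<kappa>=1..K. r \<kappa> * p_minus P n \<kappa> + (\<Prod>j=1..\<kappa>-1. if n j = 0 then 1 else 0) * p_plus P n \<kappa>))"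
        using b by simp
      also have "\<dots> = Wa n * P n + (\<Sum>\<kappa>=1..K. (r \<kappa> * Ind p k n) * p_minus P n \<kappa> + G \<kappa> n * p_plus P n \<kappa>)"
        by (simp add: Wa_def G_def sum_distrib_left algebra_simps)
      finally show ?thesis .
    qed
    have X1: "Q k * (1+R) = Xa + (\<Sum>\<kappa>=1..K. Xu \<kappa> + Xd \<kappa>)"
    proof -
      have "((\<lambda>n. Ind p k n * P n * (1+R)) has_sum (Xa + (\<Sum>\<kappa>=1..K. Xu \<kappa> + Xd \<kappa>))) (states K)"
        using tot1 eq1 by (subst has_sum_cong) auto
      then show ?thesis using lhs has_sum_unique by blast
    qed
    have sumW: "((\<lambda>m. \<Sum>\<kappa>=1..K. Wu \<kappa> m * P m + Wd \<kappa> m * P m) has_sum (\<Sum>\<kappa>=1..K. Xu \<kappa> + Xd \<kappa>)) (states K)"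
      by (rule has_sum_sum_fun) (auto intro!: has_sum_add hWu hWd)
    note tot2 = has_sum_add[OF hWa sumW]
    define c0 where "c0 = (if k=0 then 1 else (0::real))"
    define c1 where "c1 = (if k=0 then 0 else \<sigma>)"
    have Cm: "Wa m * P m + (\<Sum>\<kappa>=1..K. Wu \<kappa> m * P m + Wd \<kappa> m * P m)
       = c0 * (Ind p 0 m * P m) + Ind p (k+1) m * P m + c1 * (Ind p (k-1) m * P m) + (R-\<sigma>) * (Ind p k m * P m)"
      if "m \<in> states K" for m
    proof -
      have cu: "(\<Sum>\<kappa>=1..K. Wu \<kappa> m) = c1 * Ind p (k-1) m + (R-\<sigma>) * Ind p k m"
        unfolding Wu_def c1_def R_def \<sigma>_def by (rule core_up[OF pK])
      have cd: "Wa m + (\<Sum>\<kappa>=1..K. Wd \<kappa> m) = c0 * Ind p 0 m + Ind p (k+1) m"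
        unfolding Wa_def Wd_def G_def c0_def using core_down[OF that pK, of k] by simp
      have "Wa m * P m + (\<Sum>\<kappa>=1..K. Wu \<kappa> m * P m + Wd \<kappa> m * P m)
          = (Wa m + (\<Sum>\<kappa>=1..K. Wd \<kappa> m) + (\<Sum>\<kappa>=1..K. Wu \<kappa> m)) * P m"
      proof -
        have "(\<Sum>\<kappa>=1..K. Wu \<kappa> m * P m + Wd \<kappa> m * P m) = (\<Sum>\<kappa>=1..K. Wd \<kappa> m) * P m + (\<Sum>\<kappa>=1..K. Wu \<kappa> m) * P m"
          by (simp add: sum.distrib sum_distrib_right add.commute)
        then show ?thesis by (simp add: algebra_simps)
      qed
      also have "\<dots> = (c0 * Ind p 0 m + Ind p (k+1) m + (c1 * Ind p (k-1) m + (R-\<sigma>) * Ind p k m)) * P m"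
        using cu cd by simp
      finally show ?thesis by (simp add: algebra_simps)
    qed
    have hC: "((\<lambda>m. c0 * (Ind p 0 m * P m) + Ind p (k+1) m * P m + c1 * (Ind p (k-1) m * P m) + (R-\<sigma>) * (Ind p k m * P m))
        has_sum (c0 * Q 0 + Q (k+1) + c1 * Q (k-1) + (R-\<sigma>) * Q k)) (states K)"
      by (intro has_sum_add has_sum_cmult_right hasQ)
    have X2: "Xa + (\<Sum>\<kappa>=1..K. Xu \<kappa> + Xd \<kappa>) = c0 * Q 0 + Q (k+1) + c1 * Q (k-1) + (R-\<sigma>) * Q k"
    proof -
      have "((\<lambda>m. c0 * (Ind p 0 m * P m) + Ind p (k+1) m * P m + c1 * (Ind p (k-1) m * P m) + (R-\<sigma>) * (Ind p k m * P m))
        has_sum (Xa + (\<Sum>\<kappa>=1..K. Xu \<kappa> + Xd \<kappa>))) (states K)"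
        using tot2 Cm by (subst has_sum_cong) auto
      then show ?thesis using hC has_sum_unique by blast
    qed
    show ?thesis using X1 X2 unfolding c0_def c1_def by (simp add: algebra_simps)
  qed
  have rec: "Q (Suc k) = \<sigma> * Q k" for k
  proof (induction k)
    case 0
    then show ?case using E[of 0] by (simp add: algebra_simps)
  next
    case (Suc k)
    then show ?case using E[of "Suc k"] by (simp add: algebra_simps)
  qed
  have geo: "Q k = Q 0 * \<sigma> ^ k" for k
    by (induction k) (simp_all add: rec)
  have s0: "0 \<le> \<sigma>" unfolding \<sigma>_def by (intro sum_nonneg) (use rpos pK in \<open>fastforce intro: less_imp_le\<close>)
  have "\<sigma> \<le> R" unfolding \<sigma>_def R_def
    by (rule sum_mono2) (use rpos pK in \<open>auto intro: less_imp_le\<close>)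
  then have s1: "\<sigma> < 1" using rlt1 R_def by simp
  have hasP: "(P has_sum 1) (states K)" using summ norm has_sum_infsum by metis
  define g where "g = (\<lambda>n::nat\<Rightarrow>nat. (Spd p n, n))"
  have bij: "bij_betw g (states K) (Sigma UNIV (\<lambda>j. {n \<in> states K. Spd p n = j}))"
    unfolding bij_betw_def inj_on_def g_def by auto
  have "((\<lambda>x. (\<lambda>(j,n). P n) (g x)) has_sum 1) (states K)"
    using hasP unfolding g_def by simp
  then have hS: "((\<lambda>(j,n). P n) has_sum 1) (Sigma UNIV (\<lambda>j. {n \<in> states K. Spd p n = j}))"
    using has_sum_reindex_bij_betw[OF bij] by blast
  have "(Q has_sum 1) UNIV"
  proof (rule has_sum_Sigma'[OF hS])
    fix j :: nat
    have sub: "P summable_on {n \<in> states K. Spd p n = j}"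
      by (rule summable_on_subset_banach[OF summ]) auto
    then show "((\<lambda>y. (\<lambda>(j,n). P n) (j, y)) has_sum Q j) {n \<in> states K. Spd p n = j}"
      unfolding Q_def by (simp add: has_sum_infsum)
  qed
  then have "Q sums 1" by (rule has_sum_imp_sums)
  moreover have "Q = (\<lambda>k. Q 0 * \<sigma> ^ k)" by (rule ext) (rule geo)
  ultimately have sA: "(\<lambda>k. Q 0 * \<sigma> ^ k) sums 1" by simp
  have sB: "(\<lambda>k. Q 0 * \<sigma> ^ k) sums (Q 0 * (1 / (1 - \<sigma>)))"
    by (rule sums_mult, rule geometric_sums) (use s0 s1 in simp)
  have "Q 0 * (1 / (1 - \<sigma>)) = 1" using sums_unique2[OF sB sA] .
  then have Q0: "Q 0 = 1 - \<sigma>" using s1 by (simp add: field_simps)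
  have "Q k = (1 - \<sigma>) * \<sigma> ^ k" using geo[of k] Q0 by simp
  then show ?thesis unfolding Q_def Spd_def \<sigma>_def .
qed

end
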